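(* Let $\mu>0$, let $a\in\left(-\frac{2\mu}{9},0\right)\cup\left(0,\frac{4\mu}{9}\right)$ be real and $s_1\in\left[\frac{2\mu}{3},\infty\right)$. Define $$F(\tilde z;s_1,a)=\frac{H(\tilde z;s_1,a)}{\beta_1(a,s_1)},\quad H(\tilde z;s_1,a)=\frac{27a^2\tilde z\,(2s_1-3a)}{27a^3\tilde z-27a^2\tilde z\,s_1-(\tilde z-1)^2s_1^3},\quad \beta_1(a,s_1)=\frac{27a^2}{s_1^3}(3a-2s_1).$$ Then for all $|\tilde z|<1$, $$\frac{|\tilde z|}{(1+|\tilde z|)^2}\le\left|F(\tilde z;s_1,a)\right|\le\frac{|\tilde z|}{(1-|\tilde z|)^2}.$$ *)

theory Defs
  imports "HOL-Analysis.Analysis"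
begin

definition H_fun :: "complex \<Rightarrow> real \<Rightarrow> real \<Rightarrow> complex" where
  "H_fun z s1 a =
     (27 * of_real a ^ 2 * z * (2 * of_real s1 - 3 * of_real a)) /
     (27 * of_real a ^ 3 * z - 27 * of_real a ^ 2 * z * of_real s1 - (z - 1) ^ 2 * of_real s1 ^ 3)"

definition beta1 :: "real \<Rightarrow> real \<Rightarrow> real" where
  "beta1 a s1 = 27 * a ^ 2 / s1 ^ 3 * (3 * a - 2 * s1)"

definition F_fun :: "complex \<Rightarrow> real \<Rightarrow> real \<Rightarrow> complex" where
  "F_fun z s1 a = H_fun z s1 a / of_real (beta1 a s1)"

end

theory Submission
  imports Defs
begin

lemma q_bounds:
  fixes b :: real and z :: complex
  assumes "\<bar>b\<bar> \<le> 2" "norm z < 1"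
  shows "(1 - norm z)^2 \<le> norm (z^2 - of_real b * z + 1)"
    and "norm (z^2 - of_real b * z + 1) \<le> (1 + norm z)^2"
proof -
  define w where "w = Complex (b/2) (sqrt (1 - b^2/4))"
  have "b^2 \<le> 2^2" using power_mono[OF assms(1), of 2] by simp
  then have s: "(sqrt (1 - b^2/4))^2 = 1 - b^2/4"
    by (intro real_sqrt_pow2) simp
  have nw: "norm w = 1" unfolding w_def cmod_def using s by (simp add: power_divide)
  have nw': "norm (cnj w) = 1" using nw by simp
  have fac: "z^2 - of_real b * z + 1 = (z - w) * (z - cnj w)"
  proof -
    have "w * cnj w = 1" using s by (simp add: w_def complex_eq_iff power2_eq_square)
    moreover have "w + cnj w = of_real b" by (simp add: w_def complex_eq_iff)
    moreover have "(z - w) * (z - cnj w) = z^2 - (w + cnj w) * z + w * cnj w"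
      by (simp add: algebra_simps power2_eq_square)
    ultimately show ?thesis by simp
  qed
  have a1: "norm (z - w) \<ge> 1 - norm z" using norm_triangle_ineq2[of w z] nw by (simp add: norm_minus_commute)
  have a2: "norm (z - cnj w) \<ge> 1 - norm z" using norm_triangle_ineq2[of "cnj w" z] nw' by (simp add: norm_minus_commute)
  have "(1 - norm z)^2 \<le> norm (z - w) * norm (z - cnj w)"
    unfolding power2_eq_square using a1 a2 assms(2) by (intro mult_mono) auto
  then show "(1 - norm z)^2 \<le> norm (z^2 - of_real b * z + 1)" by (simp add: fac norm_mult)
  have "norm (z^2 - of_real b * z + 1) \<le> norm (z^2) + norm (of_real b * z) + 1"
  proof -
    have "norm (z^2 - of_real b * z + 1) \<le> norm (z^2 - of_real b * z) + norm (1::complex)"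
      by (rule norm_triangle_ineq)
    moreover have "norm (z^2 - of_real b * z) \<le> norm (z^2) + norm (of_real b * z)"
      by (rule norm_triangle_ineq4)
    ultimately show ?thesis by simp
  qed
  also have "\<dots> \<le> norm z ^2 + 2 * norm z + 1"
    using assms(1) by (simp add: norm_mult norm_power mult_right_mono)
  finally show "norm (z^2 - of_real b * z + 1) \<le> (1 + norm z)^2" by (simp add: power2_eq_square algebra_simps)
qed

theorem corollary2:
  fixes \<mu> a s1 :: real and z :: complex
  assumes "\<mu> > 0"
    and "a \<in> {-(2 * \<mu> / 9)<..<0} \<union> {0<..<4 * \<mu> / 9}"
    and "s1 \<ge> 2 * \<mu> / 3"
    and "norm z < 1"
  shows "norm z / (1 + norm z) ^ 2 \<le> norm (F_fun z s1 a)
       \<and> norm (F_fun z s1 a) \<le> norm z / (1 - norm z) ^ 2"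
proof -
  have s0: "s1 > 0" using assms by auto
  have a0: "a \<noteq> 0" "a < s1" "-s1/3 < a" "a < 2 * s1/3" using assms by auto
  define c where "c = 27 * a^2 * (s1 - a) / s1^3"
  define b where "b = 2 - c"
  have c0: "c \<ge> 0" unfolding c_def using a0 s0 by auto
  have "27 * a^2 * (s1 - a) \<le> 4 * s1^3"
  proof -
    have "0 \<le> (3*a + s1) * (3*a - 2 * s1)^2" using a0 by auto
    then show ?thesis by (simp add: power2_eq_square power3_eq_cube algebra_simps)
  qed
  then have c4: "c \<le> 4" unfolding c_def using s0 by (simp add: divide_le_eq)
  have bb: "\<bar>b\<bar> \<le> 2" unfolding b_def using c0 c4 by auto
  define q where "q = z^2 - of_real b * z + 1"
  have ql: "(1 - norm z)^2 \<le> norm q" and qu: "norm q \<le> (1 + norm z)^2"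
    using q_bounds[OF bb assms(4)] unfolding q_def by auto
  have qpos: "norm q > 0" using ql assms(4) by (smt (verit) zero_less_power)
  have q0: "q \<noteq> 0" using qpos by auto
  have den: "27 * of_real a ^ 3 * z - 27 * of_real a ^ 2 * z * of_real s1 - (z - 1) ^ 2 * of_real s1 ^ 3
     = - (of_real s1 ^ 3 * q :: complex)"
  proof -
    have ccr: "s1 ^ 3 * c = 27 * a^2 * (s1 - a)" unfolding c_def using s0 by simp
    have cc: "(of_real s1 :: complex) ^ 3 * of_real c = 27 * of_real a ^ 2 * (of_real s1 - of_real a)"
      using arg_cong[OF ccr, of "of_real :: real \<Rightarrow> complex"] by simp
    have "- (of_real s1 ^ 3 * q) = - (of_real s1 ^ 3 * (z - 1) ^ 2) - (of_real s1 ^ 3 * of_real c) * (z :: complex)"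
      unfolding q_def b_def by (simp add: algebra_simps power2_eq_square)
    also have "\<dots> = - (of_real s1 ^ 3 * (z - 1) ^ 2) - (27 * of_real a ^ 2 * (of_real s1 - of_real a)) * z"
      by (simp only: cc)
    also have "\<dots> = 27 * of_real a ^ 3 * z - 27 * of_real a ^ 2 * z * of_real s1 - (z - 1) ^ 2 * of_real s1 ^ 3"
      by (simp add: algebra_simps power2_eq_square power3_eq_cube)
    finally show ?thesis by simp
  qed
  have beta: "beta1 a s1 \<noteq> 0" unfolding beta1_def using a0 s0 by auto
  have F: "F_fun z s1 a = z / q"
  proof -
    define kr where "kr = 27 * a ^ 2 * (2 * s1 - 3 * a)"
    have kr0: "kr \<noteq> 0" unfolding kr_def using a0 s0 by auto
    have ber: "beta1 a s1 = - kr / s1 ^ 3" unfolding beta1_def kr_def by (simp add: algebra_simps)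
    have N: "27 * of_real a ^ 2 * z * (2 * of_real s1 - 3 * of_real a) = of_real kr * z"
      unfolding kr_def by (simp add: algebra_simps)
    define S where "S = (of_real s1 :: complex) ^ 3"
    have S0: "S \<noteq> 0" unfolding S_def using s0 by simp
    have be: "(of_real (beta1 a s1) :: complex) = - of_real kr / S" unfolding ber S_def by simp
    have "F_fun z s1 a = (of_real kr * z) / (- (S * q)) / (- of_real kr / S)"
      unfolding F_fun_def H_fun_def den N be S_def ..
    also have "\<dots> = z / q" using kr0 S0 q0 by (simp add: divide_simps)
    finally show ?thesis .
  qed
  have nF: "norm (F_fun z s1 a) = norm z / norm q" by (simp add: F norm_divide)
  have p1: "(1 - norm z)^2 > 0" using assms(4) by auto
  show ?thesis unfolding nF
    using ql qu qpos p1 by (auto intro!: divide_left_mono mult_pos_pos)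
qed

end
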